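(* Let $S_0,S_1\subseteq\mathbb Z_{\ge 0}$ with $0\in S_0$ and $1\in S_1$. Assume there is a positive integer $n$ such that for all $a\in S_0$ and all $b_1,\dots,b_n\in S_1$ (not necessarily distinct), $b_1+\cdots+b_n\in S_0$ and $a+b_1+\cdots+b_{n-1}\in S_1$. If $n$ is odd, then there is a nonnegative integer $A(n)$, depending only on $n$, with $A(n)\in S_0\cap S_1$. If $n$ is even, then there is a nonnegative integer $d(n)$, depending only on $n$, such that $S_0$ contains all even integers at least $d(n)$ and $S_1$ contains all odd integers at least $d(n)$. *)

theory Defs
  imports Main
begin

text \<open>Tuples b_1,...,b_n of elements of S1 (not necessarily
  distinct) are represented as functions b on indices 0..n-1.\<close>
definition closure_hyp :: "nat \<Rightarrow> nat set \<Rightarrow> nat set \<Rightarrow> bool" where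
  "closure_hyp n S0 S1 \<longleftrightarrow>
     0 \<in> S0 \<and> 1 \<in> S1 \<and>
     (\<forall>a\<in>S0. \<forall>b::nat \<Rightarrow> nat. (\<forall>i<n. b i \<in> S1) \<longrightarrow>
         (\<Sum>i<n. b i) \<in> S0 \<and> a + (\<Sum>i<n - 1. b i) \<in> S1)"

end

theory Submission
  imports Defs
begin

lemma sum_shift1: "n > 0 \<Longrightarrow> (\<Sum>i<n. if i = 0 then b else (1::nat)) = b + (n - 1)"
proof -
  assume "n > 0"
  then obtain k where k: "n = Suc k" by (cases n) auto
  have "(\<Sum>i<Suc k. if i = 0 then b else (1::nat)) = b + (\<Sum>i<k. if Suc i = 0 then b else 1)"
    by (simp only: sum.lessThan_Suc_shift) simp
  then show ?thesis unfolding k by simp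
qed

lemma L1: "closure_hyp n S0 S1 \<Longrightarrow> a \<in> S0 \<Longrightarrow> a + (n - 1) \<in> S1"
  unfolding closure_hyp_def
  apply (elim conjE)
  apply (drule bspec, assumption)
  apply (drule spec[where x="\<lambda>_. 1"])
  by simp

lemma L2: "closure_hyp n S0 S1 \<Longrightarrow> n > 0 \<Longrightarrow> b \<in> S1 \<Longrightarrow> b + (n - 1) \<in> S0"
  unfolding closure_hyp_def
  apply (elim conjE)
  apply (drule bspec[where x=0], assumption)
  apply (drule spec[where x="\<lambda>i. if i = 0 then b else 1"])
  by (simp add: sum_shift1)

lemma L3:
  assumes h: "closure_hyp n S0 S1" and n2: "n \<ge> 2" and b: "b \<in> S1"
  shows "b + (n - 2) \<in> S1"
proof -
  have h0: "0 \<in> S0" "1 \<in> S1" using h unfolding closure_hyp_def by blast+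
  have "\<forall>i<n. (if i = 0 then b else 1) \<in> S1" using h0 b by simp
  then have "0 + (\<Sum>i<n - 1. if i = 0 then b else (1::nat)) \<in> S1"
  proof -
    have "\<forall>a\<in>S0. \<forall>b::nat \<Rightarrow> nat. (\<forall>i<n. b i \<in> S1) \<longrightarrow>
         (\<Sum>i<n. b i) \<in> S0 \<and> a + (\<Sum>i<n - 1. b i) \<in> S1"
      using h unfolding closure_hyp_def by blast
    from spec[OF bspec[OF this h0(1)], of "\<lambda>i. if i = 0 then b else 1"]
    show ?thesis using \<open>\<forall>i<n. (if i = 0 then b else 1) \<in> S1\<close> by simp
  qed
  moreover have "(\<Sum>i<n - 1. if i = 0 then b else (1::nat)) = b + (n - 1 - 1)"
    by (rule sum_shift1) (use n2 in simp)
  moreover have "n - 1 - 1 = n - 2" by simp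
  ultimately show ?thesis by simp
qed

lemma iter: fixes x s :: nat shows "(\<forall>b\<in>S. b + s \<in> S) \<Longrightarrow> b \<in> S \<Longrightarrow> b + x * s \<in> S"
proof (induction x)
  case 0 then show ?case by simp
next
  case (Suc x)
  then have "b + x * s + s \<in> S" by blast
  then show ?case by (simp add: ac_simps)
qed

lemma window:
  fixes S :: "nat set" and s d :: nat
  assumes "\<forall>b\<in>S. b + s \<in> S" "s > 0" "even s"
    "\<forall>k. odd k \<and> d \<le> k \<and> k < d + s \<longrightarrow> k \<in> S"
  shows "\<forall>k. odd k \<and> d \<le> k \<longrightarrow> k \<in> S"
proof
  fix k show "odd k \<and> d \<le> k \<longrightarrow> k \<in> S"
proof (induction k rule: less_induct)
  case (less k)
  show ?case
  proof
    assume h: "odd k \<and> d \<le> k"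
    show "k \<in> S"
    proof (cases "k < d + s")
      case True then show ?thesis using h assms(4) by blast
    next
      case False
      then have "odd (k - s) \<and> d \<le> k - s" "k - s < k" using h assms(2,3) by auto
      then have "k - s \<in> S" using less by blast
      then have "k - s + s \<in> S" using assms(1) by blast
      then show ?thesis using False by simp
    qed
  qed
qed
qed

theorem lemma4p8:
  fixes n :: nat
  assumes "n > 0"
  shows "(odd n \<longrightarrow>
            (\<exists>A::nat. \<forall>S0 S1. closure_hyp n S0 S1 \<longrightarrow> A \<in> S0 \<inter> S1)) \<and>
         (even n \<longrightarrow>
            (\<exists>d::nat. \<forall>S0 S1. closure_hyp n S0 S1 \<longrightarrow>
               (\<forall>k. even k \<and> d \<le> k \<longrightarrow> k \<in> S0) \<and>
               (\<forall>k. odd k \<and> d \<le> k \<longrightarrow> k \<in> S1)))"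
proof (intro conjI impI)
  assume odn: "odd n"
  show "\<exists>A::nat. \<forall>S0 S1. closure_hyp n S0 S1 \<longrightarrow> A \<in> S0 \<inter> S1"
  proof (cases "n = 1")
    case True
    show ?thesis
    proof (intro exI[where x=0] allI impI)
      fix S0 S1 assume h: "closure_hyp n S0 S1"
      then have "0 \<in> S0" unfolding closure_hyp_def by blast
      moreover have "0 + (n - 1) \<in> S1" using L1[OF h \<open>0 \<in> S0\<close>] .
      ultimately show "0 \<in> S0 \<inter> S1" using True by simp
    qed
  next
    case False
    then have n2: "n \<ge> 2" using assms by simp
    obtain m where m: "n = 2 * m + 1" using odn oddE by blast
    show ?thesis
    proof (intro exI[where x="1 + n * (n - 2)"] allI impI)
      fix S0 S1 assume h: "closure_hyp n S0 S1"
      have s1: "1 \<in> S1" "0 \<in> S0" using h unfolding closure_hyp_def by blast+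
      have st1: "\<forall>b\<in>S1. b + (n - 2) \<in> S1" using L3[OF h n2] by blast
      have a1: "1 + n * (n - 2) \<in> S1" using iter[OF st1 s1(1)] .
      have st0: "\<forall>b\<in>S0. b + 2 * (n - 1) \<in> S0"
      proof
        fix b assume "b \<in> S0"
        then have "b + (n - 1) + (n - 1) \<in> S0" using L1[OF h] L2[OF h assms] by blast
        then show "b + 2 * (n - 1) \<in> S0" by (simp add: add.assoc mult_2)
      qed
      have "0 + m * (2 * (n - 1)) \<in> S0" using iter[OF st0 s1(2)] .
      moreover have "m * (2 * (n - 1)) = 1 + n * (n - 2)"
      proof -
        obtain m' where "m = Suc m'" using m n2 by (cases m) auto
        then show ?thesis using m by (simp add: algebra_simps)
      qed
      ultimately show "1 + n * (n - 2) \<in> S0 \<inter> S1" using a1 by simp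
    qed
  qed
next
  assume evn: "even n"
  then have n2: "n \<ge> 2" using assms by presburger
  obtain m where m: "n = 2 * m" using evn by blast
  define s where "s = (if n = 2 then 2 else n - 2)"
  define d where "d = (if n = 2 then 1 else 1 + (n - 4) * (n - 2))"
  show "\<exists>d::nat. \<forall>S0 S1. closure_hyp n S0 S1 \<longrightarrow>
               (\<forall>k. even k \<and> d \<le> k \<longrightarrow> k \<in> S0) \<and>
               (\<forall>k. odd k \<and> d \<le> k \<longrightarrow> k \<in> S1)"
  proof (rule exI[where x="d + (n - 1)"], intro allI impI, rule conjI)
    fix S0 S1 assume h: "closure_hyp n S0 S1"
    have s1: "1 \<in> S1" using h unfolding closure_hyp_def by blast
    have stA: "\<forall>b\<in>S1. b + (n - 2) \<in> S1" using L3[OF h n2] by blast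
    have stB: "\<forall>b\<in>S1. b + 2 * (n - 1) \<in> S1"
    proof
      fix b assume "b \<in> S1"
      then have "b + (n - 1) + (n - 1) \<in> S1" using L1[OF h] L2[OF h assms] by blast
      then show "b + 2 * (n - 1) \<in> S1" by (simp add: add.assoc mult_2)
    qed
    have gen: "1 + x * (n - 2) + y * (2 * (n - 1)) \<in> S1" for x y
      using iter[OF stB iter[OF stA s1]] .
    have sts: "\<forall>b\<in>S1. b + s \<in> S1"
      using stA stB n2 unfolding s_def by (cases "n = 2") auto
    have spos: "s > 0" "even s" using n2 evn unfolding s_def by auto
    have win: "\<forall>k. odd k \<and> d \<le> k \<and> k < d + s \<longrightarrow> k \<in> S1"
    proof (intro allI impI)
      fix k assume k: "odd k \<and> d \<le> k \<and> k < d + s"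
      show "k \<in> S1"
      proof (cases "n = 2")
        case True
        then have "k = 1" using k unfolding d_def s_def by simp presburger
        then show ?thesis using s1 by simp
      next
        case False
        then have n4: "n \<ge> 4" using n2 m by auto
        have dd: "d = 1 + (n - 4) * (n - 2)" "s = n - 2" using False unfolding d_def s_def by auto
        have "odd d" using dd(1) m n4 by simp
        then have "even (k - d)" using k by simp
        then obtain y where "k - d = 2 * y" by blast
        then have y: "k = d + 2 * y" using k by linarith
        have "2 * y < n - 2" using k y dd by simp
        then have y2: "2 * y \<le> n - 4" using m by presburger
        have "k = 1 + (n - 4 - 2 * y) * (n - 2) + y * (2 * (n - 1))"
        proof -
          obtain p where p: "n = p + 4" using n4 by (metis add.commute le_add_diff_inverse)
          obtain q where q: "p = 2 * y + q" using y2 p by (metis add_diff_cancel_right' le_add_diff_inverse)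
          have e1: "n - 4 - 2 * y = q" "n - 2 = p + 2" "n - 1 = p + 3" "n - 4 = p" using p q by auto
          show ?thesis unfolding y dd(1) e1 q by (simp add: algebra_simps)
        qed
        then show ?thesis using gen by simp
      qed
    qed
    have allodd: "odd k \<and> d \<le> k \<longrightarrow> k \<in> S1" for k using window[OF sts spos win] by blast
    show "\<forall>k. odd k \<and> d + (n - 1) \<le> k \<longrightarrow> k \<in> S1" using allodd by auto
    show "\<forall>k. even k \<and> d + (n - 1) \<le> k \<longrightarrow> k \<in> S0"
    proof (intro allI impI)
      fix k assume k: "even k \<and> d + (n - 1) \<le> k"
      have "odd (k - (n - 1))" using k evn n2 by auto
      moreover have "d \<le> k - (n - 1)" using k by linarith
      ultimately have "k - (n - 1) \<in> S1" using allodd by blast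
      then have "k - (n - 1) + (n - 1) \<in> S0" using L2[OF h assms] by blast
      then show "k \<in> S0" using k by simp
    qed
  qed
qed

end
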